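(* Let $n\ge2$. There exist polynomials $p_1,\dots,p_{n-1}\in\mathbb{C}[x,y]$ in the variables $(x,y)\in\mathbb{C}^n\times\mathbb{C}^{n-1}$ such that, if $B(x,y)$ denotes the $n\times n$ matrix whose first row is $(x_1,p_1(x,y),\dots,p_{n-1}(x,y))$, whose first column is $(x_1,1,0,\dots,0)^T$, and whose lower-right $(n-1)\times(n-1)$ block is the matrix with $1$'s on the subdiagonal, last column $\big((-1)^ny_{n-1},(-1)^{n-1}y_{n-2},\dots,(-1)^3y_2,y_1\big)^T$ (i.e. entry $(-1)^{n-i+1}y_{n-i}$ in its $i$-th row) and all other entries $0$, then for every $(x,y)$ and every $j=2,\dots,n$, \[ \sum_{I\in\mathscr{I}^j:\,i_1=1}\det\big(B(x,y)_I\big)=x_j. \] Moreover, for fixed $(x,y)$, the numbers $p_1(x,y),\dots,p_{n-1}(x,y)$ are the unique complex numbers placed in positions $(1,2),\dots,(1,n)$ of such a matrix (with the other entries as described) for which these $n-1$ equations hold.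
   Context: $\mathscr{I}^j$ denotes the set of increasing $j$-tuples $I=(i_1<\dots<i_j)$ in $\{1,\dots,n\}$; for a matrix $A$, $A_I$ is the principal submatrix with rows and columns indexed by $I$. *)

theory Defs
  imports Complex_Main "Jordan_Normal_Form.Determinant" "Jordan_Normal_Form.DL_Submatrix"
begin

text \<open>Over the infinite field C, polynomial functions and polynomials coincide.\<close>
inductive poly_xy :: "nat \<Rightarrow> ((nat \<Rightarrow> complex) \<Rightarrow> (nat \<Rightarrow> complex) \<Rightarrow> complex) \<Rightarrow> bool"
  for n :: nat where
  const: "poly_xy n (\<lambda>x y. c)"
| var_x: "1 \<le> i \<Longrightarrow> i \<le> n \<Longrightarrow> poly_xy n (\<lambda>x y. x i)"
| var_y: "1 \<le> i \<Longrightarrow> i \<le> n - 1 \<Longrightarrow> poly_xy n (\<lambda>x y. y i)"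
| add: "poly_xy n p \<Longrightarrow> poly_xy n q \<Longrightarrow> poly_xy n (\<lambda>x y. p x y + q x y)"
| mult: "poly_xy n p \<Longrightarrow> poly_xy n q \<Longrightarrow> poly_xy n (\<lambda>x y. p x y * q x y)"

text \<open>The n x n matrix B (0-based indices in the JNF matrix; paper entry (r,s)
  is stored at (r-1,s-1)). c k is the entry in paper position (1,k+1).\<close>
definition Bmat :: "nat \<Rightarrow> (nat \<Rightarrow> complex) \<Rightarrow> (nat \<Rightarrow> complex) \<Rightarrow> (nat \<Rightarrow> complex) \<Rightarrow> complex mat" where
  "Bmat n x y c = mat n n (\<lambda>(i, j).
     if i = 0 then (if j = 0 then x 1 else c j)
     else if j = 0 then (if i = 1 then 1 else 0)
     else if j = n - 1 then (-1) ^ (n - i + 1) * y (n - i)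
     else if i = j + 1 then 1 else 0)"

definition minor_sum :: "nat \<Rightarrow> complex mat \<Rightarrow> nat \<Rightarrow> complex" where
  "minor_sum n A j = (\<Sum>I \<in> {I. I \<subseteq> {0..<n} \<and> card I = j \<and> 0 \<in> I}. det (submatrix A I I))"

end

theory Submission
  imports Defs
begin

lemma pick_bij:
  assumes "finite I"
  shows "bij_betw (pick I) {0..<card I} I"
proof -
  have inj: "inj_on (pick I) {0..<card I}"
  proof (rule inj_onI)
    fix a b assume a: "a \<in> {0..<card I}" and b: "b \<in> {0..<card I}" and e: "pick I a = pick I b"
    show "a = b"
    proof (rule ccontr)
      assume "a \<noteq> b"
      then have "a < b \<or> b < a" by arith
      then show False using a b e pick_mono_le[of a I b] pick_mono_le[of b I a] by auto
    qed
  qed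
  have sub: "pick I ` {0..<card I} \<subseteq> I" using pick_in_set_le by auto
  have "card (pick I ` {0..<card I}) = card I" using card_image[OF inj] by simp
  then have "pick I ` {0..<card I} = I" using card_subset_eq[OF assms sub] by simp
  then show ?thesis using inj by (simp add: bij_betw_def)
qed

lemma det_submatrix_perm:
  fixes A :: "'a::comm_ring_1 mat"
  assumes A: "A \<in> carrier_mat N N" and I: "I \<subseteq> {0..<N}"
  shows "det (submatrix A I I) = (\<Sum>\<sigma>\<in>{\<sigma>. \<sigma> permutes I}. of_int (sign \<sigma>) * (\<Prod>i\<in>I. A $$ (i, \<sigma> i)))"
proof -
  define k where "k = card I"
  have fin: "finite I" using I finite_subset by blast
  have II: "{i. i < dim_row A \<and> i \<in> I} = I" "{i. i < dim_col A \<and> i \<in> I} = I" using A I by auto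
  define f where "f = pick I"
  have bij: "bij_betw f {0..<k} I" unfolding f_def k_def by (rule pick_bij[OF fin])
  have S: "submatrix A I I \<in> carrier_mat k k" unfolding k_def unfolding carrier_mat_def by (simp add: dim_submatrix II)
  have Sidx: "submatrix A I I $$ (a, b) = A $$ (f a, f b)" if "a < k" "b < k" for a b
    using that unfolding f_def k_def using submatrix_index[of a A I b I] II by simp
  define \<Phi> where "\<Phi> = (\<lambda>\<pi> x. if x \<in> I then f (\<pi> (inv_into {0..<k} f x)) else x)"
  have bijP: "bij_betw \<Phi> {\<pi>. \<pi> permutes {0..<k}} {\<pi>. \<pi> permutes I}"
    unfolding \<Phi>_def by (rule bij_betw_permutations[OF bij])
  have "det (submatrix A I I) = (\<Sum>\<tau>\<in>{\<tau>. \<tau> permutes {0..<k}}. of_int (sign \<tau>) * (\<Prod>a=0..<k. submatrix A I I $$ (a, \<tau> a)))"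
    by (rule det_def'[OF S])
  also have "\<dots> = (\<Sum>\<tau>\<in>{\<tau>. \<tau> permutes {0..<k}}. of_int (sign (\<Phi> \<tau>)) * (\<Prod>i\<in>I. A $$ (i, \<Phi> \<tau> i)))"
  proof (rule sum.cong[OF refl])
    fix \<tau> assume "\<tau> \<in> {\<tau>. \<tau> permutes {0..<k}}"
    then have t: "\<tau> permutes {0..<k}" by simp
    have fI: "f ` {0..<k} = I" using bij by (simp add: bij_betw_def)
    have "\<Phi> \<tau> = map_permutation {0..<k} f \<tau>"
      unfolding \<Phi>_def map_permutation_def restrict_id_def fI by (auto simp: fun_eq_iff)
    then have sg: "sign (\<Phi> \<tau>) = sign \<tau>"
      using sign_map_permutation[of f "{0..<k}" \<tau>] bij t by (simp add: bij_betw_def)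
    have "(\<Prod>i\<in>I. A $$ (i, \<Phi> \<tau> i)) = (\<Prod>a\<in>{0..<k}. A $$ (f a, \<Phi> \<tau> (f a)))"
      by (rule prod.reindex_bij_betw[OF bij, symmetric])
    also have "\<dots> = (\<Prod>a=0..<k. submatrix A I I $$ (a, \<tau> a))"
    proof (rule prod.cong[OF refl])
      fix a assume a: "a \<in> {0..<k}"
      have ta: "\<tau> a < k" using permutes_in_image[OF t] a by auto
      have "inv_into {0..<k} f (f a) = a" using bij a by (simp add: bij_betw_def)
      then have "\<Phi> \<tau> (f a) = f (\<tau> a)" unfolding \<Phi>_def using a bij by (auto simp: bij_betw_def)
      then show "A $$ (f a, \<Phi> \<tau> (f a)) = submatrix A I I $$ (a, \<tau> a)" using Sidx a ta by simp
    qed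
    finally show "of_int (sign \<tau>) * (\<Prod>a=0..<k. submatrix A I I $$ (a, \<tau> a)) = of_int (sign (\<Phi> \<tau>)) * (\<Prod>i\<in>I. A $$ (i, \<Phi> \<tau> i))"
      using sg by simp
  qed
  also have "\<dots> = (\<Sum>\<sigma>\<in>{\<sigma>. \<sigma> permutes I}. of_int (sign \<sigma>) * (\<Prod>i\<in>I. A $$ (i, \<sigma> i)))"
    by (rule sum.reindex_bij_betw[OF bijP])
  finally show ?thesis .
qed

definition Cp :: "nat \<Rightarrow> nat \<Rightarrow> nat" where
  "Cp q = (\<lambda>i. if i = 0 then q else if i \<le> q then i - 1 else i)"

definition Dp :: "nat \<Rightarrow> nat \<Rightarrow> nat \<Rightarrow> nat" where
  "Dp m p = (\<lambda>i. if i = p then m else if p < i \<and> i \<le> m then i - 1 else i)"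

lemma Cp_props: "Cp q permutes {0..q} \<and> sign (Cp q) = (-1) ^ q"
proof (induction q)
  case 0
  have "Cp 0 = (\<lambda>i. i)" by (auto simp: Cp_def fun_eq_iff)
  then show ?case using permutes_id[of "{0}"] sign_id by (simp add: id_def)
next
  case (Suc q)
  have eq: "Cp (Suc q) = Transposition.transpose q (Suc q) \<circ> Cp q"
    by (auto simp: Cp_def fun_eq_iff Transposition.transpose_def)
  have p1: "Transposition.transpose q (Suc q) permutes {0..Suc q}"
    using permutes_swap_id[of q "{0..Suc q}" "Suc q"] by simp
  have p2: "Cp q permutes {0..Suc q}" using conjunct1[OF Suc.IH] by (rule permutes_subset) auto
  have "Cp (Suc q) permutes {0..Suc q}" unfolding eq by (rule permutes_compose[OF p2 p1])
  moreover have "sign (Cp (Suc q)) = (-1) ^ Suc q"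
    unfolding eq using conjunct1[OF Suc.IH] conjunct2[OF Suc.IH]
    by (simp add: sign_compose permutation_swap_id permutes_imp_permutation[of "{0..q}"] sign_swap_id)
  ultimately show ?case by blast
qed

lemma Dp_props: "p \<le> m \<Longrightarrow> Dp m p permutes {p..m} \<and> sign (Dp m p) = (-1) ^ (m - p)"
proof (induction "m - p" arbitrary: p)
  case 0
  then have "p = m" by simp
  then have "Dp m p = (\<lambda>i. i)" by (auto simp: Dp_def fun_eq_iff)
  then show ?case using \<open>p = m\<close> permutes_id[of "{m}"] sign_id by (simp add: id_def)
next
  case (Suc d)
  then have pm: "p < m" "d = m - Suc p" by auto
  then have IH: "Dp m (Suc p) permutes {Suc p..m} \<and> sign (Dp m (Suc p)) = (-1) ^ (m - Suc p)"
    using Suc by auto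
  have eq: "Dp m p = Dp m (Suc p) \<circ> Transposition.transpose p (Suc p)"
    using pm by (auto simp: Dp_def fun_eq_iff Transposition.transpose_def)
  have p1: "Transposition.transpose p (Suc p) permutes {p..m}"
    using permutes_swap_id[of p "{p..m}" "Suc p"] pm by simp
  have p2: "Dp m (Suc p) permutes {p..m}" using conjunct1[OF IH] by (rule permutes_subset) auto
  have "Dp m p permutes {p..m}" unfolding eq by (rule permutes_compose[OF p1 p2])
  moreover have mp: "m - p = Suc (m - Suc p)" using pm by simp
  have "sign (Dp m p) = (-1) ^ (m - p)"
    unfolding eq mp using conjunct1[OF IH] conjunct2[OF IH] pm
    by (simp add: sign_compose permutation_swap_id permutes_imp_permutation[of "{Suc p..m}"] sign_swap_id)
  ultimately show ?case by blast
qed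

lemma E_props:
  assumes "q < p" "p \<le> m"
  shows "(Cp q \<circ> Dp m p) permutes ({0..q} \<union> {p..m}) \<and> sign (Cp q \<circ> Dp m p) = (-1) ^ q * (-1) ^ (m - p)"
proof -
  have a: "Cp q permutes ({0..q} \<union> {p..m})" using conjunct1[OF Cp_props[of q]] by (rule permutes_subset) auto
  have b: "Dp m p permutes ({0..q} \<union> {p..m})" using conjunct1[OF Dp_props[OF assms(2)]] by (rule permutes_subset) auto
  have "sign (Cp q \<circ> Dp m p) = sign (Cp q) * sign (Dp m p)"
    using Cp_props[of q] Dp_props[OF assms(2)] 
    by (intro sign_compose permutes_imp_permutation[of "{0..q}"] permutes_imp_permutation[of "{p..m}"]) blast+
  then show ?thesis using permutes_compose[OF b a] conjunct2[OF Cp_props[of q]] conjunct2[OF Dp_props[OF assms(2)]] by simp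
qed

lemma down_closed:
  assumes "0 \<in> J" "\<forall>i\<in>J. i \<noteq> 0 \<longrightarrow> i - 1 \<in> J" "s \<in> (J::nat set)"
  shows "{0..s} \<subseteq> J"
proof -
  have "\<forall>d. d \<le> s \<longrightarrow> s - d \<in> J"
  proof
    fix d show "d \<le> s \<longrightarrow> s - d \<in> J"
    proof (induction d)
      case 0 then show ?case using assms(3) by simp
    next
      case (Suc d)
      show ?case
      proof
        assume "Suc d \<le> s"
        then have "s - d \<in> J" "s - d \<noteq> 0" using Suc by auto
        then have "s - d - 1 \<in> J" using assms(2) by blast
        moreover have "s - d - 1 = s - Suc d" by arith
        ultimately show "s - Suc d \<in> J" by simp
      qed
    qed
  qed
  then show ?thesis
  proof (intro subsetI)
    fix i assume h: "\<forall>d. d \<le> s \<longrightarrow> s - d \<in> J" and "i \<in> {0..s}"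
    then have "s - (s - i) \<in> J" using h[rule_format, of "s - i"] by simp
    then show "i \<in> J" using \<open>i \<in> {0..s}\<close> by auto
  qed
qed

lemma classify:
  fixes \<sigma> :: "nat \<Rightarrow> nat" and m :: nat
  assumes Isub: "I \<subseteq> {0..m}" and I0: "0 \<in> I"
    and out: "\<forall>i. i \<notin> I \<longrightarrow> \<sigma> i = i" and inI: "\<forall>i\<in>I. \<sigma> i \<in> I"
    and inj: "\<And>a b. \<sigma> a = \<sigma> b \<Longrightarrow> a = b" and surj: "\<forall>s. \<exists>t. \<sigma> t = s"
    and allow: "\<forall>i\<in>I. i = 0 \<or> \<sigma> i = m \<or> \<sigma> i + 1 = i"
  shows "(\<exists>q. I = {0..q} \<and> \<sigma> = Cp q) \<or>
         (\<exists>q p. q < p \<and> p \<le> m \<and> I = {0..q} \<union> {p..m} \<and> \<sigma> = Cp q \<circ> Dp m p)"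
proof -
  have finI: "finite I" using Isub finite_subset by blast
  show ?thesis
  proof (cases "\<exists>p\<in>I. p \<noteq> 0 \<and> \<sigma> p + 1 \<noteq> p")
    case False
    then have dec: "\<forall>i\<in>I. i \<noteq> 0 \<longrightarrow> \<sigma> i = i - 1" by auto
    define s where "s = Max I"
    have sI: "s \<in> I" unfolding s_def using finI I0 by (intro Max_in) auto
    have sM: "\<forall>i\<in>I. i \<le> s" unfolding s_def using finI by simp
    have dc: "\<forall>i\<in>I. i \<noteq> 0 \<longrightarrow> i - 1 \<in> I"
    proof (intro ballI impI)
      fix i assume "i \<in> I" "i \<noteq> 0"
      then have "\<sigma> i = i - 1" using dec by blast
      then show "i - 1 \<in> I" using inI \<open>i \<in> I\<close> by force
    qed
    have "{0..s} \<subseteq> I" by (rule down_closed[OF I0 dc sI])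
    then have Ieq: "I = {0..s}" using sM by auto
    obtain t where t: "\<sigma> t = s" using surj by blast
    have tI: "t \<in> I" proof (rule ccontr) assume "t \<notin> I" then have "\<sigma> t = t" using out[rule_format, of t] by simp
      then show False using t sI \<open>t \<notin> I\<close> by simp qed
    have t0: "t = 0"
    proof (rule ccontr)
      assume "t \<noteq> 0"
      then have "s = t - 1" using dec tI t by auto
      moreover have "t \<le> s" using sM tI by auto
      ultimately show False using \<open>t \<noteq> 0\<close> by arith
    qed
    have "\<sigma> = Cp s"
    proof
      fix i show "\<sigma> i = Cp s i"
      proof (cases "i \<in> I")
        case True then show ?thesis using t t0 dec Ieq by (auto simp: Cp_def)
      next
        case False then show ?thesis using out Ieq by (auto simp: Cp_def)
      qed
    qed
    then show ?thesis using Ieq by blast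
  next
    case True
    then obtain p where pI: "p \<in> I" and p0: "p \<noteq> 0" and pn: "\<sigma> p + 1 \<noteq> p" by blast
    have sp: "\<sigma> p = m" using bspec[OF allow pI] p0 pn by simp
    have dec: "\<forall>i\<in>I. i \<noteq> 0 \<and> i \<noteq> p \<longrightarrow> \<sigma> i = i - 1"
    proof (intro ballI impI)
      fix i assume iI: "i \<in> I" and h: "i \<noteq> 0 \<and> i \<noteq> p"
      show "\<sigma> i = i - 1"
      proof (cases "\<sigma> i + 1 = i")
        case True then show ?thesis by arith
      next
        case False
        then have "\<sigma> i = m" using bspec[OF allow iI] h by simp
        then have "\<sigma> i = \<sigma> p" using sp by simp
        then have "i = p" by (rule inj)
        then show ?thesis using h by simp
      qed
    qed
    have mI: "m \<in> I" using bspec[OF inI pI] sp by simp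
    have pm: "p \<le> m" using pI Isub by auto
    have up: "\<forall>d. p + d \<le> m \<longrightarrow> m - d \<in> I"
    proof
      fix d show "p + d \<le> m \<longrightarrow> m - d \<in> I"
      proof (induction d)
        case 0 then show ?case using mI by simp
      next
        case (Suc d)
        show ?case
        proof
          assume h: "p + Suc d \<le> m"
          then have a: "m - d \<in> I" using Suc by auto
          have b: "m - d \<noteq> 0 \<and> m - d \<noteq> p" using h p0 by auto
          have "\<sigma> (m - d) = m - d - 1" using dec a b by blast
          then have "m - d - 1 \<in> I" using bspec[OF inI a] by simp
          moreover have "m - d - 1 = m - Suc d" by arith
          ultimately show "m - Suc d \<in> I" by simp
        qed
      qed
    qed
    have upI: "{p..m} \<subseteq> I"
    proof
      fix i assume "i \<in> {p..m}"
      then have "p + (m - i) \<le> m" "m - (m - i) = i" by auto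
      then show "i \<in> I" using up[rule_format, of "m - i"] by simp
    qed
    have sD: "\<forall>i. p < i \<and> i \<le> m \<longrightarrow> \<sigma> i = i - 1"
    proof (intro allI impI)
      fix i assume "p < i \<and> i \<le> m"
      then have "i \<in> I" "i \<noteq> 0" "i \<noteq> p" using upI by auto
      then show "\<sigma> i = i - 1" using dec by blast
    qed
    define q where "q = \<sigma> 0"
    have qI: "q \<in> I" using inI I0 unfolding q_def by blast
    have qp: "q < p"
    proof (rule ccontr)
      assume "\<not> q < p"
      then have "p \<le> q" by simp
      have "q \<le> m" using qI Isub by auto
      show False
      proof (cases "q = m")
        case True
        then have "\<sigma> 0 = \<sigma> p" using sp q_def by simp
        then have "0 = p" by (rule inj)
        then show False using p0 by simp
      next
        case False
        then have "\<sigma> (Suc q) = q" using sD \<open>p \<le> q\<close> \<open>q \<le> m\<close> by auto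
        then have "\<sigma> (Suc q) = \<sigma> 0" using q_def by simp
        then show False using inj[of "Suc q" 0] by simp
      qed
    qed
    define J where "J = {i\<in>I. i < p}"
    have J0: "0 \<in> J" using I0 p0 unfolding J_def by auto
    have Jdown: "\<forall>i\<in>J. i \<noteq> 0 \<longrightarrow> i - 1 \<in> J"
    proof (intro ballI impI)
      fix i assume "i \<in> J" "i \<noteq> 0"
      then have "i \<in> I" "i < p" "i \<noteq> p" unfolding J_def by auto
      then have "\<sigma> i = i - 1" using dec \<open>i \<noteq> 0\<close> by blast
      then have "i - 1 \<in> I" using bspec[OF inI \<open>i \<in> I\<close>] by simp
      then show "i - 1 \<in> J" using \<open>i < p\<close> unfolding J_def by auto
    qed
    have finJ: "finite J" using finI unfolding J_def by auto
    define s where "s = Max J"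
    have sJ: "s \<in> J" unfolding s_def using finJ J0 by (intro Max_in) auto
    have sM: "\<forall>i\<in>J. i \<le> s" unfolding s_def using finJ by simp
    have sub0s: "{0..s} \<subseteq> J" by (rule down_closed[OF J0 Jdown sJ])
    have sp': "s < p" "s \<in> I" using sJ unfolding J_def by auto
    obtain t where t: "\<sigma> t = s" using surj by blast
    have tI: "t \<in> I" proof (rule ccontr) assume "t \<notin> I" then have "\<sigma> t = t" using out[rule_format, of t] by simp
      then show False using t sp' \<open>t \<notin> I\<close> by simp qed
    have tp: "t < p"
    proof (rule ccontr)
      assume "\<not> t < p"
      then have "t = p \<or> (p < t \<and> t \<le> m)" using tI Isub by auto
      then show False
      proof
        assume "t = p" then show False using t sp sp' pm by simp
      next
        assume h: "p < t \<and> t \<le> m"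
        then have "\<sigma> t = t - 1" using sD by blast
        then have "s = t - 1" using t by simp
        then show False using h sp' by linarith
      qed
    qed
    have tJ: "t \<in> J" using tI tp unfolding J_def by simp
    have t0: "t = 0"
    proof (rule ccontr)
      assume "t \<noteq> 0"
      moreover have "t \<noteq> p" using tp by simp
      ultimately have "\<sigma> t = t - 1" using dec tI by blast
      then have "s = t - 1" using t by simp
      moreover have "t \<le> s" using sM tJ by auto
      ultimately show False using \<open>t \<noteq> 0\<close> by arith
    qed
    have sq: "s = q" using t t0 q_def by simp
    have Ieq: "I = {0..q} \<union> {p..m}"
    proof
      show "I \<subseteq> {0..q} \<union> {p..m}"
      proof
        fix i assume iI: "i \<in> I"
        show "i \<in> {0..q} \<union> {p..m}"
        proof (cases "i < p")
          case True then have "i \<in> J" using iI unfolding J_def by simp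
          then show ?thesis using sM sq by auto
        next
          case False then show ?thesis using iI Isub by auto
        qed
      qed
    next
      show "{0..q} \<union> {p..m} \<subseteq> I" using sub0s sq upI unfolding J_def by auto
    qed
    have "\<sigma> = Cp q \<circ> Dp m p"
    proof
      fix i
      have cs: "i = 0 \<or> (0 < i \<and> i \<le> q) \<or> i = p \<or> (p < i \<and> i \<le> m) \<or> i \<notin> I"
      proof (cases "i \<in> I")
        case True
        then have "i \<le> q \<or> (p \<le> i \<and> i \<le> m)" using Ieq by simp
        then show ?thesis by arith
      qed simp
      then consider "i = 0" | "0 < i \<and> i \<le> q" | "i = p" | "p < i \<and> i \<le> m" | "i \<notin> I"
        by blast
      then show "\<sigma> i = (Cp q \<circ> Dp m p) i"
      proof cases
        case 1
        have "Dp m p 0 = 0" using p0 by (simp add: Dp_def)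
        moreover have "Cp q 0 = q" by (simp add: Cp_def)
        ultimately show ?thesis using 1 unfolding q_def by simp
      next
        case 2
        then have "i \<in> I" "i \<noteq> p" using Ieq qp by auto
        then have "\<sigma> i = i - 1" using dec 2 by auto
        then show ?thesis using 2 qp by (simp add: Cp_def Dp_def)
      next
        case 3 then show ?thesis using sp qp pm by (simp add: Cp_def Dp_def)
      next
        case 4
        then have "\<sigma> i = i - 1" "\<not> i - 1 \<le> q" "i - 1 \<noteq> 0" "i \<noteq> p" using sD qp by auto
        then show ?thesis using 4 by (simp add: Cp_def Dp_def)
      next
        case 5
        then have "\<sigma> i = i" using out[rule_format, of i] by simp
        moreover have "\<not> i \<le> q" "i \<noteq> p" "\<not> (p < i \<and> i \<le> m)" using 5 Ieq pm by auto
        ultimately have "\<sigma> i = i" "Dp m p i = i" "Cp q i = i" unfolding Dp_def Cp_def by auto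
        then show ?thesis by simp
      qed
    qed
    then have "q < p \<and> p \<le> m \<and> I = {0..q} \<union> {p..m} \<and> \<sigma> = Cp q \<circ> Dp m p" using qp pm Ieq by simp
    then show ?thesis by (intro disjI2 exI)
  qed
qed

definition Wt :: "complex mat \<Rightarrow> nat set \<Rightarrow> (nat \<Rightarrow> nat) \<Rightarrow> complex" where
  "Wt A I \<sigma> = of_int (sign \<sigma>) * (\<Prod>i\<in>I. A $$ (i, \<sigma> i))"

lemma Bcar: "Bmat n x y c \<in> carrier_mat n n"
  unfolding Bmat_def by simp

lemma Bent: "i < n \<Longrightarrow> j < n \<Longrightarrow> Bmat n x y c $$ (i, j) =
     (if i = 0 then (if j = 0 then x 1 else c j)
     else if j = 0 then (if i = 1 then 1 else 0)
     else if j = n - 1 then (-1) ^ (n - i + 1) * y (n - i)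
     else if i = j + 1 then 1 else 0)"
  unfolding Bmat_def by simp

lemma allowed:
  assumes "i < n" "j < n" "Bmat n x y c $$ (i, j) \<noteq> 0"
  shows "i = 0 \<or> j = n - 1 \<or> j + 1 = i"
  using assms(3) unfolding Bent[OF assms(1,2)] by (auto split: if_splits)

lemma nonzero_class:
  assumes n2: "n \<ge> 2" and Isub: "I \<subseteq> {0..<n}" and I0: "0 \<in> I" and perm: "\<sigma> permutes I"
    and nz: "Wt (Bmat n x y c) I \<sigma> \<noteq> 0"
  shows "(\<exists>q. I = {0..q} \<and> \<sigma> = Cp q) \<or>
         (\<exists>q p. q < p \<and> p \<le> n - 1 \<and> I = {0..q} \<union> {p..n - 1} \<and> \<sigma> = Cp q \<circ> Dp (n - 1) p)"
proof (rule classify)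
  show "I \<subseteq> {0..n - 1}" using Isub n2 by auto
  show "0 \<in> I" by (rule I0)
  show "\<forall>i. i \<notin> I \<longrightarrow> \<sigma> i = i" using permutes_not_in[OF perm] by blast
  show inI: "\<forall>i\<in>I. \<sigma> i \<in> I" using permutes_in_image[OF perm] by blast
  show "\<And>a b. \<sigma> a = \<sigma> b \<Longrightarrow> a = b" using permutes_inj[OF perm] by (rule injD)
  show "\<forall>s. \<exists>t. \<sigma> t = s" using permutes_surj[OF perm] by (metis surjD)
  have finI: "finite I" using Isub finite_subset by blast
  have "(\<Prod>i\<in>I. Bmat n x y c $$ (i, \<sigma> i)) \<noteq> 0" using nz unfolding Wt_def by auto
  then have nz2: "\<forall>i\<in>I. Bmat n x y c $$ (i, \<sigma> i) \<noteq> 0" using prod_zero_iff[OF finI] by blast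
  show "\<forall>i\<in>I. i = 0 \<or> \<sigma> i = n - 1 \<or> \<sigma> i + 1 = i"
  proof
    fix i assume iI: "i \<in> I"
    have "i < n" using iI Isub by auto
    moreover have "\<sigma> i < n" using bspec[OF inI iI] Isub by auto
    ultimately show "i = 0 \<or> \<sigma> i = n - 1 \<or> \<sigma> i + 1 = i"
      using allowed[of i n "\<sigma> i" x y c] bspec[OF nz2 iI] by blast
  qed
qed

lemma card_two: "q < p \<Longrightarrow> card ({0..q} \<union> {p..m}) = Suc q + (Suc m - p)"
proof -
  assume "q < p"
  then have "{0..q} \<inter> {p..m} = {}" by auto
  then have "card ({0..q} \<union> {p..m}) = card {0..q} + card {p..m}" by (intro card_Un_disjoint) auto
  then show ?thesis by simp
qed

lemma Bsub: "1 \<le> i \<Longrightarrow> i < n \<Longrightarrow> Bmat n x y c $$ (i, i - 1) = 1"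
  by (subst Bent) auto

lemma Btop: "q < n \<Longrightarrow> Bmat n x y c $$ (0, q) = (if q = 0 then x 1 else c q)"
  by (subst Bent) auto

lemma Bcol: "n \<ge> 2 \<Longrightarrow> 1 \<le> p \<Longrightarrow> p \<le> n - 1 \<Longrightarrow> Bmat n x y c $$ (p, n - 1) = (-1) ^ (n - p + 1) * y (n - p)"
  by (subst Bent) auto

lemma prod_ones:
  assumes "\<forall>i\<in>{Suc a..b}. f i = (1::complex)"
  shows "(\<Prod>i\<in>{a..b}. f i) = (if a \<le> b then f a else 1)"
proof (cases "a \<le> b")
  case True
  then have "{a..b} = insert a {Suc a..b}" by auto
  then have "(\<Prod>i\<in>{a..b}. f i) = f a * (\<Prod>i\<in>{Suc a..b}. f i)" by simp
  also have "(\<Prod>i\<in>{Suc a..b}. f i) = 1" using assms by (intro prod.neutral) blast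
  finally show ?thesis using True by simp
next
  case False then show ?thesis by simp
qed

lemma W1:
  assumes k1: "1 \<le> k" and kn: "k < n"
  shows "Wt (Bmat n x y c) {0..k} (Cp k) = (-1) ^ k * c k"
proof -
  have "(\<Prod>i\<in>{0..k}. Bmat n x y c $$ (i, Cp k i)) = Bmat n x y c $$ (0, Cp k 0)"
  proof (subst prod_ones)
    show "\<forall>i\<in>{Suc 0..k}. Bmat n x y c $$ (i, Cp k i) = 1"
    proof
      fix i assume i: "i \<in> {Suc 0..k}"
      then have "Cp k i = i - 1" by (simp add: Cp_def)
      then show "Bmat n x y c $$ (i, Cp k i) = 1" using Bsub[of i n x y c] i kn by simp
    qed
  qed simp
  also have "\<dots> = c k" using Btop[of k n x y c] kn k1 by (simp add: Cp_def)
  finally show ?thesis unfolding Wt_def using conjunct2[OF Cp_props[of k]] by simp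
qed

lemma neg1_cancel: "(-1::complex) ^ d * (-1) ^ (d + 2) = 1"
proof -
  have "(-1::complex) ^ d * (-1) ^ (d + 2) = ((-1) * (-1)) ^ d * ((-1) * (-1))"
    by (simp add: power_add power_mult_distrib)
  then show ?thesis by simp
qed

lemma W2:
  assumes n2: "n \<ge> 2" and qp: "q < p" and pm: "p \<le> n - 1"
  shows "Wt (Bmat n x y c) ({0..q} \<union> {p..n - 1}) (Cp q \<circ> Dp (n - 1) p) =
           (-1) ^ q * (if q = 0 then x 1 else c q) * y (n - p)"
proof -
  define B where "B = Bmat n x y c"
  define E where "E = Cp q \<circ> Dp (n - 1) p"
  have disj: "{0..q} \<inter> {p..n - 1} = {}" using qp by auto
  have P1: "(\<Prod>i\<in>{0..q}. B $$ (i, E i)) = (if q = 0 then x 1 else c q)"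
  proof -
    have "(\<Prod>i\<in>{0..q}. B $$ (i, E i)) = B $$ (0, E 0)"
    proof (subst prod_ones)
      show "\<forall>i\<in>{Suc 0..q}. B $$ (i, E i) = 1"
      proof
        fix i assume i: "i \<in> {Suc 0..q}"
        then have "E i = i - 1" using qp unfolding E_def by (simp add: Cp_def Dp_def)
        moreover have "i < n" "1 \<le> i" using i qp pm by auto
        ultimately show "B $$ (i, E i) = 1" using Bsub[of i n x y c] unfolding B_def by simp
      qed
    qed simp
    also have "E 0 = q" using qp unfolding E_def by (simp add: Cp_def Dp_def)
    also have "B $$ (0, q) = (if q = 0 then x 1 else c q)" unfolding B_def using Btop[of q n] qp pm by simp
    finally show ?thesis .
  qed
  have P2: "(\<Prod>i\<in>{p..n - 1}. B $$ (i, E i)) = (-1) ^ (n - p + 1) * y (n - p)"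
  proof -
    have "(\<Prod>i\<in>{p..n - 1}. B $$ (i, E i)) = B $$ (p, E p)"
    proof (subst prod_ones)
      show "\<forall>i\<in>{Suc p..n - 1}. B $$ (i, E i) = 1"
      proof
        fix i assume i: "i \<in> {Suc p..n - 1}"
        then have "Dp (n - 1) p i = i - 1" by (simp add: Dp_def)
        moreover have "\<not> i - 1 \<le> q" "i - 1 \<noteq> 0" using i qp by auto
        then have "Cp q (i - 1) = i - 1" by (simp add: Cp_def)
        ultimately have "E i = i - 1" unfolding E_def by simp
        moreover have "i < n" "1 \<le> i" using i qp pm by auto
        ultimately show "B $$ (i, E i) = 1" using Bsub[of i n x y c] unfolding B_def by simp
      qed
    qed (use pm in simp)
    also have "E p = n - 1" using qp pm unfolding E_def by (simp add: Cp_def Dp_def)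
    also have "B $$ (p, n - 1) = (-1) ^ (n - p + 1) * y (n - p)" unfolding B_def
      using Bcol[OF n2, of p x y c] qp pm by simp
    finally show ?thesis .
  qed
  have sg: "sign E = (-1) ^ q * (-1) ^ (n - 1 - p)" unfolding E_def using E_props[OF qp pm] by blast
  have "Wt B ({0..q} \<union> {p..n - 1}) E = of_int (sign E) * ((\<Prod>i\<in>{0..q}. B $$ (i, E i)) * (\<Prod>i\<in>{p..n - 1}. B $$ (i, E i)))"
    unfolding Wt_def using disj by (subst prod.union_disjoint) auto
  also have "\<dots> = (-1) ^ q * ((-1) ^ (n - 1 - p) * (-1) ^ (n - p + 1)) * (if q = 0 then x 1 else c q) * y (n - p)"
    unfolding P1 P2 sg by simp
  also have "(-1::complex) ^ (n - 1 - p) * (-1) ^ (n - p + 1) = 1"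
  proof -
    have "n - p + 1 = (n - 1 - p) + 2" using pm n2 by arith
    then show ?thesis using neg1_cancel[of "n - 1 - p"] by simp
  qed
  finally have "Wt B ({0..q} \<union> {p..n - 1}) E = (-1) ^ q * (if q = 0 then x 1 else c q) * y (n - p)" by simp
  then show ?thesis unfolding B_def E_def .
qed

lemma minor_formula:
  assumes n2: "n \<ge> 2" and j2: "2 \<le> j" and jn: "j \<le> n"
  shows "minor_sum n (Bmat n x y c) j =
    (-1) ^ (j - 1) * c (j - 1) + (\<Sum>q<j - 1. (-1) ^ q * (if q = 0 then x 1 else c q) * y (j - 1 - q))"
proof -
  define B where "B = Bmat n x y c"
  define m where "m = n - 1"
  define II where "II = {I. I \<subseteq> {0..<n} \<and> card I = j \<and> 0 \<in> I}"
  define GI where "GI = (\<lambda>q. if q = j - 1 then {0..q} else {0..q} \<union> {q + m + 2 - j..m})"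
  define Gs where "Gs = (\<lambda>q. if q = j - 1 then Cp q else Cp q \<circ> Dp m (q + m + 2 - j))"
  define G where "G = (\<lambda>q. (GI q, Gs q))"
  define S where "S = Sigma II (\<lambda>I. {\<sigma>. \<sigma> permutes I})"
  define F where "F = (\<lambda>(I, \<sigma>). Wt B I \<sigma>)"
  have finII: "finite II" unfolding II_def by (rule finite_subset[of _ "Pow {0..<n}"]) auto
  have finP: "\<forall>I\<in>II. finite {\<sigma>. \<sigma> permutes I}"
  proof
    fix I assume "I \<in> II"
    then have "finite I" unfolding II_def using finite_subset by blast
    then show "finite {\<sigma>. \<sigma> permutes I}" by (rule finite_permutations)
  qed
  have finS: "finite S" unfolding S_def using finII finP by (intro finite_SigmaI) auto
  have "minor_sum n B j = (\<Sum>I\<in>II. \<Sum>\<sigma>\<in>{\<sigma>. \<sigma> permutes I}. Wt B I \<sigma>)"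
    unfolding minor_sum_def II_def Wt_def
  proof (rule sum.cong[OF refl])
    fix I assume "I \<in> {I. I \<subseteq> {0..<n} \<and> card I = j \<and> 0 \<in> I}"
    then have "I \<subseteq> {0..<n}" by simp
    then show "det (submatrix B I I) = (\<Sum>\<sigma>\<in>{\<sigma>. \<sigma> permutes I}. of_int (sign \<sigma>) * (\<Prod>i\<in>I. B $$ (i, \<sigma> i)))"
      unfolding B_def by (rule det_submatrix_perm[OF Bcar])
  qed
  also have "\<dots> = (\<Sum>z\<in>S. F z)" unfolding S_def F_def
    by (rule sum.Sigma[OF finII finP])
  also have "\<dots> = (\<Sum>z\<in>G ` {..<j}. F z)"
  proof (rule sum.mono_neutral_right[OF finS])
    show "G ` {..<j} \<subseteq> S"
    proof
      fix z assume "z \<in> G ` {..<j}"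
      then obtain q where q: "q < j" and z: "z = G q" by blast
      show "z \<in> S"
      proof (cases "q = j - 1")
        case True
        have "GI q = {0..j - 1}" "Gs q = Cp (j - 1)" unfolding GI_def Gs_def using True by auto
        moreover have "{0..j - 1} \<in> II" unfolding II_def using j2 jn by auto
        moreover have "Cp (j - 1) permutes {0..j - 1}" using Cp_props by blast
        ultimately show ?thesis unfolding z G_def S_def by simp
      next
        case False
        define p where "p = q + m + 2 - j"
        have qp: "q < p" and pm: "p \<le> m" using False q j2 jn unfolding p_def m_def by auto
        have e: "GI q = {0..q} \<union> {p..m}" "Gs q = Cp q \<circ> Dp m p"
          unfolding GI_def Gs_def p_def using False by auto
        have "card ({0..q} \<union> {p..m}) = Suc q + (Suc m - p)" by (rule card_two[OF qp])
        also have "\<dots> = j" using False q j2 jn unfolding p_def m_def by auto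
        finally have "{0..q} \<union> {p..m} \<in> II" unfolding II_def using pm qp n2 unfolding m_def by auto
        moreover have "(Cp q \<circ> Dp m p) permutes ({0..q} \<union> {p..m})" using E_props[OF qp pm] by blast
        ultimately show ?thesis unfolding z G_def S_def e by simp
      qed
    qed
    show "\<forall>z\<in>S - G ` {..<j}. F z = 0"
    proof
      fix z assume zS: "z \<in> S - G ` {..<j}"
      obtain I \<sigma> where z: "z = (I, \<sigma>)" by (cases z)
      have I: "I \<subseteq> {0..<n}" "card I = j" "0 \<in> I" and perm: "\<sigma> permutes I"
        using zS unfolding z S_def II_def by auto
      have nG: "(I, \<sigma>) \<notin> G ` {..<j}" using zS z by simp
      show "F z = 0"
      proof (rule ccontr)
        assume "F z \<noteq> 0"
        then have nz: "Wt (Bmat n x y c) I \<sigma> \<noteq> 0" unfolding F_def z B_def by simp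
        from nonzero_class[OF n2 I(1) I(3) perm nz]
        show False
        proof
          assume "\<exists>q. I = {0..q} \<and> \<sigma> = Cp q"
          then obtain q where e: "I = {0..q}" "\<sigma> = Cp q" by blast
          then have "q = j - 1" using I(2) by simp
          then have "G (j - 1) = (I, \<sigma>)" unfolding G_def GI_def Gs_def using e by simp
          moreover have "j - 1 < j" using j2 by simp
          ultimately have "(I, \<sigma>) \<in> G ` {..<j}" by (intro image_eqI[of _ G "j - 1"]) auto
          then show False using nG by contradiction
        next
          assume "\<exists>q p. q < p \<and> p \<le> n - 1 \<and> I = {0..q} \<union> {p..n - 1} \<and> \<sigma> = Cp q \<circ> Dp (n - 1) p"
          then obtain q p where e: "q < p" "p \<le> m" "I = {0..q} \<union> {p..m}" "\<sigma> = Cp q \<circ> Dp m p"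
            unfolding m_def by blast
          have "card I = Suc q + (Suc m - p)" unfolding e(3) by (rule card_two[OF e(1)])
          then have cj: "Suc q + (Suc m - p) = j" using I(2) by simp
          then have qj: "q \<noteq> j - 1" "q < j" using e(1,2) by arith+
          have pe: "p = q + m + 2 - j" using cj e(1,2) by arith
          have "G q = (I, \<sigma>)" unfolding G_def GI_def Gs_def using qj e pe by simp
          then have "(I, \<sigma>) \<in> G ` {..<j}" using qj by (intro image_eqI[of _ G q]) auto
          then show False using nG by contradiction
        qed
      qed
    qed
  qed
  also have "\<dots> = (\<Sum>q<j. F (G q))"
  proof (rule sum.reindex[unfolded comp_def])
    have G0: "snd (G q) 0 = q" if "q < j" for q
    proof (cases "q = j - 1")
      case True then show ?thesis unfolding G_def Gs_def by (simp add: Cp_def)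
    next
      case False
      then have "q + m + 2 - j \<noteq> 0" using that j2 jn unfolding m_def by auto
      then have "Dp m (q + m + 2 - j) 0 = 0" by (simp add: Dp_def)
      then show ?thesis unfolding G_def Gs_def using False by (simp add: Cp_def)
    qed
    show "inj_on G {..<j}"
    proof (rule inj_onI)
      fix a b assume "a \<in> {..<j}" "b \<in> {..<j}" "G a = G b"
      then have "snd (G a) 0 = snd (G b) 0" by simp
      moreover have "snd (G a) 0 = a" "snd (G b) 0 = b" using G0 \<open>a \<in> {..<j}\<close> \<open>b \<in> {..<j}\<close> by auto
      ultimately show "a = b" by simp
    qed
  qed
  also have "\<dots> = F (G (j - 1)) + (\<Sum>q<j - 1. F (G q))"
  proof -
    have "j = Suc (j - 1)" using j2 by simp
    then have "(\<Sum>q<j. F (G q)) = (\<Sum>q<Suc (j - 1). F (G q))" by simp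
    also have "\<dots> = (\<Sum>q<j - 1. F (G q)) + F (G (j - 1))" by (rule sum.lessThan_Suc)
    finally show ?thesis by simp
  qed
  also have "F (G (j - 1)) = (-1) ^ (j - 1) * c (j - 1)"
    unfolding F_def G_def GI_def Gs_def B_def using W1[of "j - 1" n x y c] j2 jn by simp
  also have "(\<Sum>q<j - 1. F (G q)) = (\<Sum>q<j - 1. (-1) ^ q * (if q = 0 then x 1 else c q) * y (j - 1 - q))"
  proof (rule sum.cong[OF refl])
    fix q assume "q \<in> {..<j - 1}"
    then have q: "q < j - 1" by simp
    define p where "p = q + m + 2 - j"
    have qp: "q < p" and pm: "p \<le> n - 1" and np: "n - p = j - 1 - q" using q j2 jn unfolding p_def m_def by auto
    have "F (G q) = Wt B ({0..q} \<union> {p..n - 1}) (Cp q \<circ> Dp (n - 1) p)"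
      unfolding F_def G_def GI_def Gs_def p_def m_def using q by simp
    also have "\<dots> = (-1) ^ q * (if q = 0 then x 1 else c q) * y (n - p)"
      unfolding B_def by (rule W2[OF n2 qp pm])
    finally show "F (G q) = (-1) ^ q * (if q = 0 then x 1 else c q) * y (j - 1 - q)" using np by simp
  qed
  finally show ?thesis unfolding B_def by simp
qed

primrec Fh :: "(nat \<Rightarrow> complex) \<Rightarrow> (nat \<Rightarrow> complex) \<Rightarrow> nat \<Rightarrow> nat \<Rightarrow> complex" where
  "Fh x y 0 = (\<lambda>q. x 1)"
| "Fh x y (Suc k) = (\<lambda>q. if q \<le> k then Fh x y k q
      else (-1) ^ Suc k * (x (Suc k + 1) - (\<Sum>r<Suc k. (-1) ^ r * Fh x y k r * y (Suc k - r))))"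

lemma Fh_stable: "q \<le> k \<Longrightarrow> Fh x y k q = Fh x y q q"
proof (induction k)
  case 0 then show ?case by simp
next
  case (Suc k)
  show ?case
  proof (cases "q \<le> k")
    case True then show ?thesis using Suc by simp
  next
    case False then have "q = Suc k" using Suc.prems by simp
    then show ?thesis by simp
  qed
qed

lemma Fh_0: "Fh x y 0 0 = x 1" by simp

lemma Fh_Suc: "Fh x y (Suc k) (Suc k) =
   (-1) ^ Suc k * (x (Suc k + 1) - (\<Sum>r<Suc k. (-1) ^ r * Fh x y r r * y (Suc k - r)))"
proof -
  have "(\<Sum>r<Suc k. (-1) ^ r * Fh x y k r * y (Suc k - r)) = (\<Sum>r<Suc k. (-1) ^ r * Fh x y r r * y (Suc k - r))"
  proof (rule sum.cong[OF refl])
    fix r assume "r \<in> {..<Suc k}"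
    then have "Fh x y k r = Fh x y r r" by (intro Fh_stable) simp
    then show "(-1) ^ r * Fh x y k r * y (Suc k - r) = (-1) ^ r * Fh x y r r * y (Suc k - r)" by simp
  qed
  then show ?thesis by simp
qed

lemma neg1_sq: "(-1::complex) ^ k * (-1) ^ k = 1"
  by (simp add: power_mult_distrib[symmetric])

lemma poly_cong: "poly_xy n f \<Longrightarrow> (\<And>x y. f x y = g x y) \<Longrightarrow> poly_xy n g"
proof -
  assume "poly_xy n f" "\<And>x y. f x y = g x y"
  moreover have "f = g" using \<open>\<And>x y. f x y = g x y\<close> by (intro ext) simp
  ultimately show ?thesis by simp
qed

lemma poly_sum: "(\<And>r. r < (K::nat) \<Longrightarrow> poly_xy n (f r)) \<Longrightarrow> poly_xy n (\<lambda>x y. \<Sum>r<K. f r x y)"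
proof (induction K)
  case 0 then show ?case using poly_xy.const[of n 0] by simp
next
  case (Suc K)
  have "poly_xy n (\<lambda>x y. (\<Sum>r<K. f r x y) + f K x y)"
    using Suc by (intro poly_xy.add) auto
  then show ?case by simp
qed

lemma poly_Fh: "q \<le> n - 1 \<Longrightarrow> n \<ge> 2 \<Longrightarrow> poly_xy n (\<lambda>x y. Fh x y q q)"
proof (induction q rule: less_induct)
  case (less q)
  show ?case
  proof (cases q)
    case 0
    then show ?thesis using poly_xy.var_x[of 1 n] less.prems by simp
  next
    case (Suc k)
    have ps: "poly_xy n (\<lambda>x y. \<Sum>r<Suc k. (-1) ^ r * Fh x y r r * y (Suc k - r))"
    proof (rule poly_sum)
      fix r assume r: "r < Suc k"
      have a: "poly_xy n (\<lambda>x y. Fh x y r r)" using less.IH[of r] r Suc less.prems by simp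
      have b: "poly_xy n (\<lambda>x y. y (Suc k - r))" using r Suc less.prems by (intro poly_xy.var_y) auto
      show "poly_xy n (\<lambda>x y. (-1) ^ r * Fh x y r r * y (Suc k - r))"
        by (intro poly_xy.mult poly_xy.const a b)
    qed
    have px: "poly_xy n (\<lambda>x y. x (Suc k + 1))" using Suc less.prems by (intro poly_xy.var_x) auto
    have "poly_xy n (\<lambda>x y. (-1) ^ Suc k * (x (Suc k + 1) + (-1) * (\<Sum>r<Suc k. (-1) ^ r * Fh x y r r * y (Suc k - r))))"
      by (intro poly_xy.mult poly_xy.add poly_xy.const px ps)
    then show ?thesis unfolding Suc Fh_Suc by (rule poly_cong) simp
  qed
qed

theorem lemma2p3:
  fixes n :: nat
  assumes "n \<ge> 2"
  shows "\<exists>p :: nat \<Rightarrow> (nat \<Rightarrow> complex) \<Rightarrow> (nat \<Rightarrow> complex) \<Rightarrow> complex.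
           (\<forall>k \<in> {1..n-1}. poly_xy n (p k)) \<and>
           (\<forall>x y. \<forall>j \<in> {2..n}. minor_sum n (Bmat n x y (\<lambda>k. p k x y)) j = x j) \<and>
           (\<forall>x y c. (\<forall>j \<in> {2..n}. minor_sum n (Bmat n x y c) j = x j)
               \<longrightarrow> (\<forall>k \<in> {1..n-1}. c k = p k x y))"
proof (intro exI[of _ "\<lambda>k x y. Fh x y k k"] conjI ballI allI impI)
  fix k assume "k \<in> {1..n - 1}"
  then show "poly_xy n (\<lambda>x y. Fh x y k k)" using poly_Fh assms by simp
next
  fix x y and j :: nat assume j: "j \<in> {2..n}"
  define c where "c = (\<lambda>k. Fh x y k k)"
  obtain k where k: "j = Suc (Suc k)" using j by (metis atLeastAtMost_iff add_2_eq_Suc le_Suc_ex)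
  have cq: "(if q = 0 then x 1 else Fh x y q q) = Fh x y q q" for q by simp
  have "minor_sum n (Bmat n x y c) j =
    (-1) ^ (j - 1) * c (j - 1) + (\<Sum>q<j - 1. (-1) ^ q * (if q = 0 then x 1 else c q) * y (j - 1 - q))"
    using minor_formula[OF assms, of j x y c] j by simp
  also have "\<dots> = (-1) ^ Suc k * Fh x y (Suc k) (Suc k) + (\<Sum>q<Suc k. (-1) ^ q * Fh x y q q * y (Suc k - q))"
    unfolding k c_def by (simp only: cq) simp
  also have "\<dots> = x j"
    unfolding Fh_Suc k using neg1_sq[of "Suc k"] by (simp add: algebra_simps)
  finally show "minor_sum n (Bmat n x y (\<lambda>k. Fh x y k k)) j = x j" unfolding c_def .
next
  fix x y c k
  assume eqs: "\<forall>j\<in>{2..n}. minor_sum n (Bmat n x y c) j = x j" and k: "k \<in> {1..n - 1}"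
  have main: "q \<le> n - 1 \<Longrightarrow> (if q = 0 then x 1 else c q) = Fh x y q q" for q
  proof (induction q rule: less_induct)
    case (less q)
    show ?case
    proof (cases q)
      case 0 then show ?thesis by simp
    next
      case (Suc k)
      have j: "Suc (Suc k) \<in> {2..n}" using Suc less.prems by auto
      have "x (Suc (Suc k)) = minor_sum n (Bmat n x y c) (Suc (Suc k))" using eqs j by simp
      also have "\<dots> = (-1) ^ Suc k * c (Suc k) + (\<Sum>q<Suc k. (-1) ^ q * (if q = 0 then x 1 else c q) * y (Suc k - q))"
        using minor_formula[OF assms, of "Suc (Suc k)" x y c] j by simp
      also have "(\<Sum>q<Suc k. (-1) ^ q * (if q = 0 then x 1 else c q) * y (Suc k - q)) = (\<Sum>q<Suc k. (-1) ^ q * Fh x y q q * y (Suc k - q))"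
        by (rule sum.cong[OF refl]) (use less.IH Suc less.prems in simp)
      finally have e: "x (Suc (Suc k)) = (-1) ^ Suc k * c (Suc k) + (\<Sum>q<Suc k. (-1) ^ q * Fh x y q q * y (Suc k - q))" .
      have "Fh x y (Suc k) (Suc k) = (-1) ^ Suc k * (x (Suc (Suc k)) - (\<Sum>q<Suc k. (-1) ^ q * Fh x y q q * y (Suc k - q)))"
        unfolding Fh_Suc by simp
      also have "\<dots> = (-1) ^ Suc k * ((-1) ^ Suc k * c (Suc k))"
        by (subst e) simp
      also have "\<dots> = c (Suc k)" using neg1_sq[of "Suc k"] by (simp add: mult.assoc[symmetric])
      finally show ?thesis using Suc by simp
    qed
  qed
  have "k \<noteq> 0" "k \<le> n - 1" using k by auto
  then show "c k = Fh x y k k" using main[of k] by simp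
qed

end
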